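(* Let $Y$ be a continuous random variable supported on $[0,\infty)$ whose density $f$ satisfies $f(t)\le Ce^{-\lambda t}$ for all $t\ge0$, for some $C,\lambda>0$, and such that the support of $Y$ can be partitioned into $N$ intervals on each of which $f$ is differentiable and monotone. Let $\alpha$ satisfy $0<\alpha\le\lambda/2$. Then there is a constant $K_\alpha$ (depending on $\alpha,C,\lambda,N$) such that for every complex $s$ with $\Re s = -\alpha$, \[ |\mathbb{E}[e^{-sY}]| \le \frac{K_\alpha}{\sqrt{|s|}}. \] *)

theory Defs
  imports "HOL-Probability.Probability"
begin

definition piecewise_diff_monotone :: "nat \<Rightarrow> (real \<Rightarrow> real) \<Rightarrow> real set \<Rightarrow> bool" where
  "piecewise_diff_monotone N f S \<longleftrightarrow>
     (\<exists>I :: nat \<Rightarrow> real set.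
        (\<forall>k<N. is_interval (I k) \<and> I k \<noteq> {} \<and> f differentiable_on I k
                \<and> (mono_on (I k) f \<or> antimono_on (I k) f))
      \<and> (\<forall>j<N. \<forall>k<N. j \<noteq> k \<longrightarrow> I j \<inter> I k = {})
      \<and> (\<Union>k<N. I k) = S)"

end

theory Submission
  imports Defs
begin


lemma small_set:
  fixes A :: "real set" and h :: real
  assumes A: "A \<in> sets borel" and h: "h \<ge> 0" and d: "\<And>x y. x \<in> A \<Longrightarrow> y \<in> A \<Longrightarrow> \<bar>x - y\<bar> \<le> h"
  shows "integrable lborel (indicator A :: real \<Rightarrow> real) \<and> measure lborel A \<le> 2 * h"
proof (cases "A = {}")
  case True then show ?thesis using h by simp
next
  case False
  then obtain x0 where x0: "x0 \<in> A" by blast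
  have sub: "A \<subseteq> {x0 - h .. x0 + h}" using d[OF _ x0] by (force simp: abs_le_iff)
  have fm: "{x0 - h .. x0 + h} \<in> fmeasurable lborel" using h by (simp add: fmeasurable_def emeasure_lborel_Icc)
  have "emeasure lborel A \<le> emeasure lborel {x0 - h .. x0 + h}" using sub by (rule emeasure_mono) simp
  also have "\<dots> < \<infinity>" using fm by (simp add: fmeasurable_def)
  finally have "emeasure lborel A < \<infinity>" .
  then have "integrable lborel (indicator A :: real \<Rightarrow> real)" using A
    by (simp add: integrable_indicator_iff)
  moreover have "measure lborel A \<le> measure lborel {x0 - h .. x0 + h}"
    by (rule measure_mono_fmeasurable[OF sub _ fm]) (use A in simp)
  ultimately show ?thesis using h by simp
qed

lemma interval_exit_small:
  fixes J :: "real set"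
  assumes "is_interval J" "h > 0" "x \<in> J" "y \<in> J" "x + h \<notin> J" "y + h \<notin> J"
  shows "\<bar>x - y\<bar> \<le> h"
proof (rule ccontr)
  assume "\<not> ?thesis"
  then have "x + h < y \<or> y + h < x" by auto
  then show False
  proof
    assume "x + h < y" then have "x + h \<in> J" using assms mem_is_interval_1_I[of J x y "x+h"] by auto
    then show False using assms by auto
  next
    assume "y + h < x" then have "y + h \<in> J" using assms mem_is_interval_1_I[of J y x "y+h"] by auto
    then show False using assms by auto
  qed
qed

lemma interval_enter_small:
  fixes J :: "real set"
  assumes "is_interval J" "h > 0" "x - h \<in> J" "y - h \<in> J" "x \<notin> J" "y \<notin> J"
  shows "\<bar>x - y\<bar> \<le> h"
  using interval_exit_small[OF assms(1,2,3,4)] assms by simp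

lemma bridge:
  fixes f :: "real \<Rightarrow> real" and s :: complex
  assumes "distributed M lborel Y (\<lambda>t. ennreal (f t))" "\<And>t. 0 \<le> f t"
  shows "(LINT x|M. exp (- s * complex_of_real (Y x))) = (\<integral>t. f t *\<^sub>R exp (- s * complex_of_real t) \<partial>lborel)"
proof -
  have "Y \<in> measurable M lborel" using assms(1) by (rule distributed_measurable)
  then have Y[measurable]: "Y \<in> borel_measurable M" by simp
  have fm: "(\<lambda>t. ennreal (f t)) \<in> borel_measurable lborel" using assms(1) by (rule distributed_borel_measurable)
  then have [measurable]: "f \<in> borel_measurable lborel" using assms(2) by simp
  have "(LINT x|M. exp (- s * complex_of_real (Y x))) = integral\<^sup>L (distr M lborel Y) (\<lambda>t. exp (- s * complex_of_real t))"
    by (rule integral_distr[symmetric]) auto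
  also have "\<dots> = integral\<^sup>L (density lborel (\<lambda>t. ennreal (f t))) (\<lambda>t. exp (- s * complex_of_real t))"
    using distributed_distr_eq_density[OF assms(1)] by simp
  also have "\<dots> = (\<integral>t. f t *\<^sub>R exp (- s * complex_of_real t) \<partial>lborel)"
    by (rule integral_density) (auto simp: assms(2))
  finally show ?thesis .
qed



lemma exit_left_small:
  fixes J :: "real set"
  assumes "is_interval J" "h > 0" "x \<in> J" "y \<in> J" "x - h \<notin> J" "y - h \<notin> J"
  shows "\<bar>x - y\<bar> \<le> h"
proof (rule ccontr)
  assume "\<not> ?thesis"
  then have "x + h < y \<or> y + h < x" by auto
  then show False
  proof
    assume "x + h < y" then have "y - h \<in> J" using assms mem_is_interval_1_I[of J x y "y-h"] by auto
    then show False using assms by auto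
  next
    assume "y + h < x" then have "x - h \<in> J" using assms mem_is_interval_1_I[of J y x "x-h"] by auto
    then show False using assms by auto
  qed
qed

lemma piece:
  fixes f :: "real \<Rightarrow> real" and J :: "real set"
  assumes fm[measurable]: "f \<in> borel_measurable borel"
    and f0: "\<And>t. 0 \<le> f t" and al: "0 < \<alpha>" and h: "h > 0" and C: "C > 0"
    and wC: "\<And>t. f t * exp (\<alpha> * t) \<le> C"
    and wi: "integrable lborel (\<lambda>t. f t * exp (\<alpha> * t))"
    and wW: "(\<integral>t. f t * exp (\<alpha> * t) \<partial>lborel) \<le> W"
    and JI: "is_interval J" and sig: "\<bar>\<sigma>\<bar> = 1"
  shows "integrable lborel (\<lambda>t. indicator {t. t \<in> J \<and> t + h \<in> J} t * (\<sigma> * (f t - f (t + h)) * exp (\<alpha> * t)))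
    \<and> (\<integral>t. indicator {t. t \<in> J \<and> t + h \<in> J} t * (\<sigma> * (f t - f (t + h)) * exp (\<alpha> * t)) \<partial>lborel)
        \<le> 4 * C * h + \<alpha> * h * W"
proof -
  define w where "w t = f t * exp (\<alpha> * t)" for t
  define S where "S = {t. t \<in> J \<and> t + h \<in> J}"
  have [measurable]: "J \<in> sets borel" using JI by (rule real_interval_borel_measurable)
  have Sm[measurable]: "S \<in> sets borel" unfolding S_def by measurable
  have wm[measurable]: "w \<in> borel_measurable borel" unfolding w_def by measurable
  have wi': "integrable lborel w" using wi unfolding w_def by simp
  have wnn: "0 \<le> w t" for t unfolding w_def using f0[of t] by simp
  have wsi: "integrable lborel (\<lambda>t. w (t + h))"
    using lborel_integrable_real_affine_iff[of 1 w h] wi' by (simp add: add.commute)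
  have i1: "integrable lborel (\<lambda>t. w t * indicator S t)"
    by (rule integrable_real_mult_indicator[OF _ wi']) simp
  have i2: "integrable lborel (\<lambda>t. w (t + h) * indicator S t)"
    by (rule integrable_real_mult_indicator[OF _ wsi]) simp
  have i3: "integrable lborel (\<lambda>x. w x * indicator S (x - h))"
    by (rule Bochner_Integration.integrable_bound[OF wi']) (auto simp: wnn split: split_indicator)
  have eq: "indicator S t * (\<sigma> * (f t - f (t + h)) * exp (\<alpha> * t))
      = \<sigma> * (w t * indicator S t) - \<sigma> * exp (- \<alpha> * h) * (w (t + h) * indicator S t)" for t
  proof -
    have "exp (- \<alpha> * h) * exp (\<alpha> * (t + h)) = exp (\<alpha> * t)"
      by (simp add: exp_add[symmetric] algebra_simps)
    then show ?thesis unfolding w_def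
      by (simp add: algebra_simps)
  qed
  define a where "a = (\<integral>t. w t * indicator S t \<partial>lborel)"
  define b where "b = (\<integral>x. w x * indicator S (x - h) \<partial>lborel)"
  have bb: "(\<integral>t. w (t + h) * indicator S t \<partial>lborel) = b"
    unfolding b_def
    using lborel_integral_real_affine[of 1 "\<lambda>t. w (t + h) * indicator S t" "-h"] by simp
  have intg: "integrable lborel (\<lambda>t. indicator S t * (\<sigma> * (f t - f (t + h)) * exp (\<alpha> * t)))"
    unfolding eq using i1 i2 by simp
  have val: "(\<integral>t. indicator S t * (\<sigma> * (f t - f (t + h)) * exp (\<alpha> * t)) \<partial>lborel) = \<sigma> * a - \<sigma> * exp (- \<alpha> * h) * b"
    unfolding eq a_def bb[symmetric] using i1 i2 by simp
  define E1 where "E1 = {x. x \<in> J \<and> x - h \<notin> J}"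
  define E2 where "E2 = {x. x \<in> J \<and> x + h \<notin> J}"
  have [measurable]: "E1 \<in> sets borel" unfolding E1_def by measurable
  have [measurable]: "E2 \<in> sets borel" unfolding E2_def by measurable
  have s1: "integrable lborel (indicator E1 :: real \<Rightarrow> real) \<and> measure lborel E1 \<le> 2 * h"
    by (rule small_set) (use h JI exit_left_small in \<open>auto simp: E1_def\<close>)
  have s2: "integrable lborel (indicator E2 :: real \<Rightarrow> real) \<and> measure lborel E2 \<le> 2 * h"
    by (rule small_set) (use h JI interval_exit_small in \<open>auto simp: E2_def\<close>)
  have ab: "\<bar>a - b\<bar> \<le> 4 * C * h"
  proof -
    have "a - b = (\<integral>x. w x * indicator S x - w x * indicator S (x - h) \<partial>lborel)"
      unfolding a_def b_def using i1 i3 by simp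
    also have "\<bar>\<dots>\<bar> \<le> (\<integral>x. C * (indicator E1 x + indicator E2 x) \<partial>lborel)"
    proof (rule integral_abs_bound_integral)
      show "integrable lborel (\<lambda>x. w x * indicator S x - w x * indicator S (x - h))" using i1 i3 by simp
      show "integrable lborel (\<lambda>x. C * (indicator E1 x + indicator E2 x) :: real)" using s1 s2 by simp
      fix x :: real
      have "w x \<le> C" using wC unfolding w_def by simp
      then show "\<bar>w x * indicator S x - w x * indicator S (x - h)\<bar> \<le> C * (indicator E1 x + indicator E2 x)"
        using wnn[of x] C by (auto simp: S_def E1_def E2_def split: split_indicator)
    qed
    also have "\<dots> = C * (measure lborel E1 + measure lborel E2)"
      using s1 s2 by simp
    also have "\<dots> \<le> C * (2 * h + 2 * h)" using s1 s2 C by (intro mult_left_mono) auto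
    finally show ?thesis by simp
  qed
  have b0: "0 \<le> b" unfolding b_def by (intro Bochner_Integration.integral_nonneg) (simp add: wnn)
  have bW: "b \<le> W"
  proof -
    have "b \<le> (\<integral>x. w x \<partial>lborel)" unfolding b_def
      by (rule integral_mono'[OF wi']) (auto simp: wnn split: split_indicator)
    then show ?thesis using wW unfolding w_def by simp
  qed
  have e1: "1 - exp (- \<alpha> * h) \<le> \<alpha> * h" using exp_ge_add_one_self[of "- \<alpha> * h"] by simp
  have e0: "0 \<le> 1 - exp (- \<alpha> * h)" using al h by simp
  have "\<sigma> * a - \<sigma> * exp (- \<alpha> * h) * b = \<sigma> * (a - b) + \<sigma> * ((1 - exp (- \<alpha> * h)) * b)"
    by (simp add: algebra_simps)
  also have "\<dots> \<le> \<bar>a - b\<bar> + (1 - exp (- \<alpha> * h)) * b"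
  proof -
    have "\<sigma> * (a - b) \<le> \<bar>\<sigma> * (a - b)\<bar>" by simp
    also have "\<dots> = \<bar>a - b\<bar>" using sig by (simp add: abs_mult)
    finally have 1: "\<sigma> * (a - b) \<le> \<bar>a - b\<bar>" .
    have "\<sigma> * ((1 - exp (- \<alpha> * h)) * b) \<le> \<bar>\<sigma> * ((1 - exp (- \<alpha> * h)) * b)\<bar>" by simp
    also have "\<dots> = (1 - exp (- \<alpha> * h)) * b" using sig e0 b0 by (simp add: abs_mult)
    finally show ?thesis using 1 by simp
  qed
  also have "\<dots> \<le> 4 * C * h + \<alpha> * h * W"
    using ab mult_mono[OF e1 bW _ b0] al h b0 by (simp add: algebra_simps)
  finally show ?thesis using intg val unfolding S_def by simp
qed



definition W0 :: "real \<Rightarrow> real \<Rightarrow> real" where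
  "W0 C lam = (\<integral>t. indicator {0..} t * (C * exp (-(lam/2)*t)) \<partial>lborel)"

lemma w0_int:
  assumes "lam > 0"
  shows "integrable lborel (\<lambda>t. indicator {0..} t * (C * exp (-(lam/2)*t)) :: real)"
proof -
  have "(\<lambda>x. exp (-(lam/2)*x)) integrable_on {0..}"
    using assms by (intro integrable_on_exp_minus_to_infinity) simp
  then have "(\<lambda>x. exp (-(lam/2)*x)) absolutely_integrable_on {0..}"
    by (intro nonnegative_absolutely_integrable_1) auto
  from integrable_mult_right[OF this[unfolded set_integrable_def], of C]
  show ?thesis by (subst (asm) integrable_completion) (auto simp: mult_ac)
qed

lemma key:
  fixes f :: "real \<Rightarrow> real" and J :: "nat \<Rightarrow> real set"
  assumes fm[measurable]: "f \<in> borel_measurable borel"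
    and f0: "\<And>t. 0 \<le> f t" and fneg: "\<And>t. t < 0 \<Longrightarrow> f t = 0"
    and fC: "\<And>t. t \<ge> 0 \<Longrightarrow> f t \<le> C * exp (- lam * t)"
    and C: "C > 0" and lam: "lam > 0" and al: "0 < \<alpha>" "\<alpha> \<le> lam/2" and h: "h > 0"
    and Jint: "\<And>k. k < N \<Longrightarrow> is_interval (J k)"
    and Jmono: "\<And>k. k < N \<Longrightarrow> mono_on (J k) f \<or> antimono_on (J k) f"
    and Jdisj: "\<And>j k. j < N \<Longrightarrow> k < N \<Longrightarrow> j \<noteq> k \<Longrightarrow> J j \<inter> J k = {}"
    and Jun: "(\<Union>k<N. J k) = {0..}"
  shows "integrable lborel (\<lambda>t. \<bar>f t - f (t + h)\<bar> * exp (\<alpha> * t))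
    \<and> (\<integral>t. \<bar>f t - f (t + h)\<bar> * exp (\<alpha> * t) \<partial>lborel) \<le> h * (2*C*(1 + 2*N) + N * (4*C + \<alpha> * W0 C lam))"
proof -
  define w where "w t = f t * exp (\<alpha> * t)" for t
  define w0 where "w0 t = indicator {0..} t * (C * exp (-(lam/2)*t))" for t :: real
  have wm[measurable]: "w \<in> borel_measurable borel" unfolding w_def by measurable
  have w0i: "integrable lborel w0" unfolding w0_def using w0_int[OF lam] .
  have w_nn: "0 \<le> w t" for t unfolding w_def using f0[of t] by simp
  have w_le0: "w t \<le> w0 t" for t
  proof (cases "t \<ge> 0")
    case True
    have "w t \<le> C * exp (- lam * t) * exp (\<alpha> * t)" unfolding w_def using fC[OF True] by (intro mult_right_mono) auto
    also have "\<dots> = C * exp ((\<alpha> - lam) * t)" by (simp add: mult_exp_exp algebra_simps)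
    also have "\<dots> \<le> C * exp (-(lam/2)*t)"
    proof -
      have "(\<alpha> - lam) * t \<le> (-(lam/2)) * t" by (rule mult_right_mono) (use True al in auto)
      then show ?thesis using C by (intro mult_left_mono) auto
    qed
    finally show ?thesis using True by (simp add: w0_def)
  next
    case False then show ?thesis by (simp add: w_def w0_def fneg)
  qed
  have w0C: "w0 t \<le> C" for t
  proof (cases "t \<ge> 0")
    case True
    then have "exp (-(lam/2)*t) \<le> 1" using lam by simp
    then show ?thesis using True C by (simp add: w0_def)
  qed (use C in \<open>simp add: w0_def\<close>)
  have wC: "w t \<le> C" for t using w_le0[of t] w0C[of t] by simp
  have wi: "integrable lborel w"
    by (rule Bochner_Integration.integrable_bound[OF w0i]) (use w_nn w_le0 in \<open>auto intro!: AE_I2 order.trans[OF _ abs_ge_self]\<close>)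
  have W0nn: "0 \<le> W0 C lam" unfolding W0_def using C by (intro Bochner_Integration.integral_nonneg) auto
  have wW: "(\<integral>t. w t \<partial>lborel) \<le> W0 C lam" unfolding W0_def
    using integral_mono[OF wi w0i w_le0] by (simp add: w0_def)
  have wsi: "integrable lborel (\<lambda>t. w (t + h))"
    using lborel_integrable_real_affine_iff[of 1 w h] wi by (simp add: add.commute)
  define \<sigma> where "\<sigma> k = (if mono_on (J k) f then -1 else 1 :: real)" for k
  define S where "S k = {t. t \<in> J k \<and> t + h \<in> J k}" for k
  define E where "E k = {t. t \<in> J k \<and> t + h \<notin> J k}" for k
  define P where "P k t = indicator (S k) t * (\<sigma> k * (f t - f (t + h)) * exp (\<alpha> * t))" for k t
  have Jm[measurable]: "J k \<in> sets borel" if "k < N" for k using Jint[OF that] by (rule real_interval_borel_measurable)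
  have pc: "integrable lborel (P k) \<and> integral\<^sup>L lborel (P k) \<le> 4 * C * h + \<alpha> * h * W0 C lam" if k: "k < N" for k
    unfolding P_def S_def
    by (rule piece[OF fm f0 al(1) h C _ _ _ Jint[OF k]])
       (use wC wi[unfolded w_def[abs_def]] wW in \<open>auto simp: w_def \<sigma>_def\<close>)
  have Pnn: "0 \<le> P k t" if k: "k < N" for k t
  proof (cases "t \<in> S k")
    case True
    then have tt: "t \<in> J k" "t + h \<in> J k" "t \<le> t + h" using h by (auto simp: S_def)
    show ?thesis
    proof (cases "mono_on (J k) f")
      case True
      then have "f t \<le> f (t + h)" using monotone_onD[OF True tt] by simp
      then show ?thesis using True \<open>t \<in> S k\<close> by (simp add: P_def \<sigma>_def)
    next
      case False
      then have am: "antimono_on (J k) f" using Jmono[OF k] by blast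
      have "f (t + h) \<le> f t" using monotone_onD[OF am tt] by simp
      then show ?thesis using False \<open>t \<in> S k\<close> by (simp add: P_def \<sigma>_def)
    qed
  qed (simp add: P_def)
  have Pabs: "P k t = \<bar>f t - f (t + h)\<bar> * exp (\<alpha> * t)" if k: "k < N" and t: "t \<in> S k" for k t
  proof -
    have tt: "t \<in> J k" "t + h \<in> J k" "t \<le> t + h" using h t by (auto simp: S_def)
    show ?thesis
    proof (cases "mono_on (J k) f")
      case True
      then have "f t \<le> f (t + h)" using monotone_onD[OF True tt] by simp
      then show ?thesis using True t by (simp add: P_def \<sigma>_def)
    next
      case False
      then have am: "antimono_on (J k) f" using Jmono[OF k] by blast
      have "f (t + h) \<le> f t" using monotone_onD[OF am tt] by simp
      then show ?thesis using False t by (simp add: P_def \<sigma>_def)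
    qed
  qed
  have Em[measurable]: "E k \<in> sets borel" if "k < N" for k unfolding E_def using Jm[OF that] by measurable
  have Es: "integrable lborel (indicator (E k) :: real \<Rightarrow> real) \<and> measure lborel (E k) \<le> 2 * h" if k: "k < N" for k
    by (rule small_set[OF Em[OF k]]) (use h Jint[OF k] interval_exit_small in \<open>auto simp: E_def\<close>)
  have Ii: "integrable lborel (indicator {-h..0} :: real \<Rightarrow> real)"
    using h by (simp add: integrable_indicator_iff emeasure_lborel_Icc)
  define R where "R t = 2 * C * (indicator {-h..0} t + (\<Sum>k<N. indicator (E k) t)) + (\<Sum>k<N. P k t)" for t
  have Dle: "\<bar>f t - f (t + h)\<bar> * exp (\<alpha> * t) \<le> w t + w (t + h)" for t
  proof -
    have "\<bar>f t - f (t + h)\<bar> \<le> f t + f (t + h)" using f0[of t] f0[of "t+h"] by linarith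
    then have "\<bar>f t - f (t + h)\<bar> * exp (\<alpha> * t) \<le> (f t + f (t + h)) * exp (\<alpha> * t)"
      by (intro mult_right_mono) auto
    also have "\<dots> \<le> f t * exp (\<alpha> * t) + f (t + h) * exp (\<alpha> * (t + h))"
      using f0[of "t+h"] al h by (simp add: distrib_right mult_left_mono)
    finally show ?thesis by (simp add: w_def)
  qed
  have D2C: "\<bar>f t - f (t + h)\<bar> * exp (\<alpha> * t) \<le> 2 * C" for t
    using Dle[of t] wC[of t] wC[of "t+h"] by linarith
  have Enn: "0 \<le> (\<Sum>k<N. indicator (E k) t :: real)" for t by (simp add: sum_nonneg)
  have Psum_nn: "0 \<le> (\<Sum>k<N. P k t)" for t by (rule sum_nonneg) (simp add: Pnn)
  have R_nn: "0 \<le> R t" for t unfolding R_def using Enn[of t] Psum_nn[of t] C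
    by (simp add: sum_nonneg)
  have DleR: "\<bar>f t - f (t + h)\<bar> * exp (\<alpha> * t) \<le> R t" for t
  proof (cases "t < 0")
    case True
    show ?thesis
    proof (cases "t < -h")
      case True
      then have "f t = 0" "f (t + h) = 0" using fneg h \<open>t < 0\<close> by auto
      then show ?thesis using R_nn[of t] by simp
    next
      case False
      then have "indicator {-h..0} t = (1::real)" using \<open>t < 0\<close> by simp
      then have "2 * C * 1 \<le> 2 * C * (indicator {-h..0} t + (\<Sum>k<N. indicator (E k) t))"
        using Enn[of t] C by (intro mult_left_mono) auto
      then have "2 * C \<le> R t" unfolding R_def using Psum_nn[of t] by linarith
      then show ?thesis using D2C[of t] by linarith
    qed
  next
    case False
    then have "t \<in> (\<Union>k<N. J k)" using Jun by auto
    then obtain k where k: "k < N" "t \<in> J k" by auto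
    show ?thesis
    proof (cases "t + h \<in> J k")
      case True
      then have tS: "t \<in> S k" using k by (simp add: S_def)
      have "P k t \<le> (\<Sum>k<N. P k t)"
        by (rule member_le_sum[of k "{..<N}" "\<lambda>k. P k t"]) (use k Pnn in auto)
      moreover have "0 \<le> 2 * C * (indicator {-h..0} t + (\<Sum>k<N. indicator (E k) t))"
        using Enn[of t] C by (intro mult_nonneg_nonneg add_nonneg_nonneg) auto
      ultimately show ?thesis unfolding R_def using Pabs[OF k(1) tS] by linarith
    next
      case True2: False
      then have "t \<in> E k" using k by (simp add: E_def)
      then have "1 \<le> (\<Sum>k<N. indicator (E k) t :: real)"
        using member_le_sum[of k "{..<N}" "\<lambda>k. indicator (E k) t :: real"] k by auto
      then have "2 * C * 1 \<le> 2 * C * (indicator {-h..0} t + (\<Sum>k<N. indicator (E k) t))"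
        using C by (intro mult_left_mono) (auto simp: indicator_def)
      then have "2 * C \<le> R t" unfolding R_def using Psum_nn[of t] by linarith
      then show ?thesis using D2C[of t] by linarith
    qed
  qed
  have Di: "integrable lborel (\<lambda>t. \<bar>f t - f (t + h)\<bar> * exp (\<alpha> * t))"
  proof (rule Bochner_Integration.integrable_bound[OF Bochner_Integration.integrable_add[OF wi wsi]])
    show "(\<lambda>t. \<bar>f t - f (t + h)\<bar> * exp (\<alpha> * t)) \<in> borel_measurable lborel" by measurable
    show "AE x in lborel. norm (\<bar>f x - f (x + h)\<bar> * exp (\<alpha> * x)) \<le> norm (w x + w (x + h))"
      using Dle w_nn by (auto intro!: AE_I2)
  qed
  have Esi: "integrable lborel (\<lambda>t. \<Sum>k<N. indicator (E k) t :: real)"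
    by (rule Bochner_Integration.integrable_sum) (use Es in auto)
  have Psi: "integrable lborel (\<lambda>t. \<Sum>k<N. P k t)"
    by (rule Bochner_Integration.integrable_sum) (use pc in auto)
  have Ri: "integrable lborel R" unfolding R_def
    by (intro Bochner_Integration.integrable_add Bochner_Integration.integrable_mult_right Ii Esi Psi)
  have "(\<integral>t. \<bar>f t - f (t + h)\<bar> * exp (\<alpha> * t) \<partial>lborel) \<le> integral\<^sup>L lborel R"
    by (rule integral_mono[OF Di Ri DleR])
  also have "\<dots> = 2 * C * (h + (\<Sum>k<N. measure lborel (E k))) + (\<Sum>k<N. integral\<^sup>L lborel (P k))"
  proof -
    have 1: "integral\<^sup>L lborel R = 2 * C * (integral\<^sup>L lborel (indicator {-h..0} :: real \<Rightarrow> real)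
        + (\<integral>t. (\<Sum>k<N. indicator (E k) t :: real) \<partial>lborel)) + (\<integral>t. (\<Sum>k<N. P k t) \<partial>lborel)"
      unfolding R_def using Ii Esi Psi by simp
    have 2: "(\<integral>t. (\<Sum>k<N. indicator (E k) t :: real) \<partial>lborel) = (\<Sum>k<N. integral\<^sup>L lborel (indicator (E k) :: real \<Rightarrow> real))"
      by (rule Bochner_Integration.integral_sum) (use Es in auto)
    have 3: "(\<integral>t. (\<Sum>k<N. P k t) \<partial>lborel) = (\<Sum>k<N. integral\<^sup>L lborel (P k))"
      by (rule Bochner_Integration.integral_sum) (use pc in auto)
    show ?thesis unfolding 1 2 3 using h by simp
  qed
  also have "\<dots> \<le> 2 * C * (h + (\<Sum>k<N. 2 * h)) + (\<Sum>k<N. 4 * C * h + \<alpha> * h * W0 C lam)"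
    using Es pc C by (intro add_mono mult_left_mono sum_mono) auto
  also have "\<dots> = h * (2*C*(1 + 2*N) + N * (4*C + \<alpha> * W0 C lam))"
    by (simp add: algebra_simps)
  finally show ?thesis using Di by simp
qed



lemma fourier:
  fixes f :: "real \<Rightarrow> real" and J :: "nat \<Rightarrow> real set" and s :: complex
  assumes fm[measurable]: "f \<in> borel_measurable borel"
    and f0: "\<And>t. 0 \<le> f t" and fneg: "\<And>t. t < 0 \<Longrightarrow> f t = 0"
    and fC: "\<And>t. t \<ge> 0 \<Longrightarrow> f t \<le> C * exp (- lam * t)"
    and C: "C > 0" and lam: "lam > 0" and al: "0 < \<alpha>" "\<alpha> \<le> lam/2"
    and Jint: "\<And>k. k < N \<Longrightarrow> is_interval (J k)"
    and Jmono: "\<And>k. k < N \<Longrightarrow> mono_on (J k) f \<or> antimono_on (J k) f"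
    and Jdisj: "\<And>j k. j < N \<Longrightarrow> k < N \<Longrightarrow> j \<noteq> k \<Longrightarrow> J j \<inter> J k = {}"
    and Jun: "(\<Union>k<N. J k) = {0..}"
    and s: "Re s = - \<alpha>"
  shows "cmod (\<integral>t. f t *\<^sub>R exp (- s * complex_of_real t) \<partial>lborel) \<le> W0 C lam"
    and "Im s \<noteq> 0 \<Longrightarrow> cmod (\<integral>t. f t *\<^sub>R exp (- s * complex_of_real t) \<partial>lborel)
          \<le> pi / \<bar>Im s\<bar> * (2*C*(1 + 2*real N) + real N * (4*C + \<alpha> * W0 C lam))"
proof -
  define w where "w t = f t * exp (\<alpha> * t)" for t
  define w0 where "w0 t = indicator {0..} t * (C * exp (-(lam/2)*t))" for t :: real
  define g where "g t = f t *\<^sub>R exp (- s * complex_of_real t)" for t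
  have gm[measurable]: "g \<in> borel_measurable borel" unfolding g_def by measurable
  have ng: "norm (g t) = w t" for t unfolding g_def w_def using f0[of t] s by simp
  have w0i: "integrable lborel w0" unfolding w0_def using w0_int[OF lam] .
  have wm[measurable]: "w \<in> borel_measurable borel" unfolding w_def by measurable
  have w_nn: "0 \<le> w t" for t unfolding w_def using f0[of t] by simp
  have w_le0: "w t \<le> w0 t" for t
  proof (cases "t \<ge> 0")
    case True
    have "w t \<le> C * exp (- lam * t) * exp (\<alpha> * t)" unfolding w_def using fC[OF True] by (intro mult_right_mono) auto
    also have "\<dots> = C * exp ((\<alpha> - lam) * t)" by (simp add: mult_exp_exp algebra_simps)
    also have "\<dots> \<le> C * exp (-(lam/2)*t)"
    proof -
      have "(\<alpha> - lam) * t \<le> (-(lam/2)) * t" by (rule mult_right_mono) (use True al in auto)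
      then show ?thesis using C by (intro mult_left_mono) auto
    qed
    finally show ?thesis using True by (simp add: w0_def)
  next
    case False then show ?thesis by (simp add: w_def w0_def fneg)
  qed
  have wi: "integrable lborel w"
    by (rule Bochner_Integration.integrable_bound[OF w0i]) (use w_nn w_le0 in \<open>auto intro!: AE_I2 order.trans[OF _ abs_ge_self]\<close>)
  have gi: "integrable lborel g"
    by (rule Bochner_Integration.integrable_bound[OF wi]) (auto simp: ng)
  have "cmod (integral\<^sup>L lborel g) \<le> (\<integral>t. norm (g t) \<partial>lborel)"
    by (rule integral_norm_bound)
  also have "\<dots> = (\<integral>t. w t \<partial>lborel)" by (simp add: ng)
  also have "\<dots> \<le> W0 C lam" unfolding W0_def
    using integral_mono[OF wi w0i w_le0] by (simp add: w0_def)
  finally show "cmod (\<integral>t. f t *\<^sub>R exp (- s * complex_of_real t) \<partial>lborel) \<le> W0 C lam"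
    by (simp add: g_def[abs_def])
  show "cmod (\<integral>t. f t *\<^sub>R exp (- s * complex_of_real t) \<partial>lborel)
          \<le> pi / \<bar>Im s\<bar> * (2*C*(1 + 2*real N) + real N * (4*C + \<alpha> * W0 C lam))" if om: "Im s \<noteq> 0"
  proof -
  define h where "h = pi / \<bar>Im s\<bar>"
  have h: "h > 0" using om by (simp add: h_def)
  have ph: "Im s * h = pi \<or> Im s * h = - pi" using om by (auto simp: h_def abs_if)
  have ce: "exp (- s * complex_of_real h) = - complex_of_real (exp (\<alpha> * h))"
  proof -
    have "cis (Im (- s * complex_of_real h)) = -1" using ph by (auto simp: cis.code complex_eq_iff)
    then show ?thesis by (subst exp_eq_polar) (simp add: s)
  qed
  define g2 where "g2 x = f (h + x) *\<^sub>R exp (- s * complex_of_real x)" for x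
  have gh: "g (h + x) = exp (- s * complex_of_real h) * g2 x" for x
  proof -
    have e: "exp (- s * complex_of_real (h + x)) = exp (- s * complex_of_real h) * exp (- s * complex_of_real x)"
      by (simp add: exp_add[symmetric] distrib_left)
    show ?thesis unfolding g_def g2_def e by simp
  qed
  have ghi: "integrable lborel (\<lambda>x. g (h + x))"
    using lborel_integrable_real_affine[OF gi, of 1 h] by simp
  have g2i: "integrable lborel g2"
  proof -
    have "g2 x = exp (s * complex_of_real h) * g (h + x)" for x
      unfolding gh by (simp add: mult.assoc[symmetric] exp_add[symmetric])
    then have "g2 = (\<lambda>x. exp (s * complex_of_real h) * g (h + x))" by (rule ext)
    then show ?thesis using ghi by simp
  qed
  define I where "I = integral\<^sup>L lborel g"
  have IJ: "I = - complex_of_real (exp (\<alpha> * h)) * integral\<^sup>L lborel g2"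
  proof -
    have "I = (\<integral>x. g (h + 1 * x) \<partial>lborel)" unfolding I_def
      using lborel_integral_real_affine[of 1 g h] by simp
    also have "\<dots> = (\<integral>x. exp (- s * complex_of_real h) * g2 x \<partial>lborel)" by (simp add: gh)
    also have "\<dots> = exp (- s * complex_of_real h) * integral\<^sup>L lborel g2"
      by (rule integral_mult_right_zero)
    also have "\<dots> = - complex_of_real (exp (\<alpha> * h)) * integral\<^sup>L lborel g2" by (simp only: ce)
    finally show ?thesis .
  qed
  have J2: "integral\<^sup>L lborel g2 = - complex_of_real (exp (- \<alpha> * h)) * I"
    unfolding IJ by (simp add: mult.assoc[symmetric] exp_add[symmetric] flip: of_real_mult)
  have "I - integral\<^sup>L lborel g2 = (\<integral>x. g x - g2 x \<partial>lborel)" unfolding I_def using gi g2i by simp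
  then have "complex_of_real (1 + exp (- \<alpha> * h)) * I = (\<integral>x. g x - g2 x \<partial>lborel)"
    unfolding J2 by (simp add: algebra_simps)
  then have "(1 + exp (- \<alpha> * h)) * cmod I = cmod (\<integral>x. g x - g2 x \<partial>lborel)"
    by (metis norm_mult norm_of_real abs_of_pos add_pos_pos exp_gt_zero zero_less_one)
  also have "\<dots> \<le> (\<integral>x. norm (g x - g2 x) \<partial>lborel)" by (rule integral_norm_bound)
  also have "\<dots> = (\<integral>t. \<bar>f t - f (t + h)\<bar> * exp (\<alpha> * t) \<partial>lborel)"
  proof (rule Bochner_Integration.integral_cong[OF refl])
    fix x
    have "g x - g2 x = (f x - f (h + x)) *\<^sub>R exp (- s * complex_of_real x)"
      unfolding g_def g2_def by (simp add: scaleR_diff_left)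
    then show "norm (g x - g2 x) = \<bar>f x - f (x + h)\<bar> * exp (\<alpha> * x)" using s by (simp add: add.commute)
  qed
  also have "\<dots> \<le> h * (2*C*(1 + 2*real N) + real N * (4*C + \<alpha> * W0 C lam))"
    using key[OF fm f0 fneg fC C lam al h Jint Jmono Jdisj Jun] by simp
  finally have "(1 + exp (- \<alpha> * h)) * cmod I \<le> h * (2*C*(1 + 2*real N) + real N * (4*C + \<alpha> * W0 C lam))" .
  moreover have "1 * cmod I \<le> (1 + exp (- \<alpha> * h)) * cmod I" by (intro mult_right_mono) auto
  ultimately have "cmod I \<le> h * (2*C*(1 + 2*real N) + real N * (4*C + \<alpha> * W0 C lam))" by linarith
  then show ?thesis unfolding I_def h_def by (simp add: g_def[abs_def])
  qed
qed



lemma arith_final: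
  fixes B0 A \<alpha> r I w :: real
  assumes B0: "0 \<le> B0" and A: "0 \<le> A" and al: "0 < \<alpha>" and r: "\<alpha> \<le> r" and rw: "r \<le> \<alpha> + \<bar>w\<bar>"
    and I1: "I \<le> B0" and I2: "w \<noteq> 0 \<Longrightarrow> I \<le> pi / \<bar>w\<bar> * A"
  shows "I \<le> (B0 * sqrt (2 * \<alpha>) + 2 * pi * A / sqrt \<alpha>) / sqrt r"
proof -
  define q where "q = sqrt r"
  have rpos: "0 < r" using al r by simp
  have q: "0 < q" "q * q = r" using rpos by (auto simp: q_def)
  have qa: "sqrt \<alpha> \<le> q" unfolding q_def using r by simp
  have sa: "0 < sqrt \<alpha>" using al by simp
  have T2: "0 \<le> 2 * pi * A / sqrt \<alpha>" using A sa by simp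
  have T1: "0 \<le> B0 * sqrt (2 * \<alpha>)" using B0 al by simp
  show ?thesis
  proof (cases "\<bar>w\<bar> \<le> \<alpha>")
    case True
    have "q \<le> sqrt (2 * \<alpha>)" unfolding q_def using rw True by simp
    then have "B0 * q \<le> B0 * sqrt (2 * \<alpha>)" using B0 by (rule mult_left_mono)
    then have "B0 * q \<le> B0 * sqrt (2 * \<alpha>) + 2 * pi * A / sqrt \<alpha>" using T2 by linarith
    then have "B0 \<le> (B0 * sqrt (2 * \<alpha>) + 2 * pi * A / sqrt \<alpha>) / q" using q by (simp add: field_simps)
    then show ?thesis using I1 unfolding q_def by linarith
  next
    case False
    then have w0: "w \<noteq> 0" and wr: "r \<le> 2 * \<bar>w\<bar>" using rw al by auto
    have "pi / \<bar>w\<bar> * A \<le> 2 * pi * A / r"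
      using w0 wr rpos A by (simp add: field_simps mult_left_mono)
    also have "\<dots> \<le> (2 * pi * A / sqrt \<alpha>) / q"
    proof -
      have "2 * pi * A / q \<le> 2 * pi * A / sqrt \<alpha>"
        by (rule divide_left_mono[OF qa]) (use A q sa in auto)
      then have "(2 * pi * A / q) / q \<le> (2 * pi * A / sqrt \<alpha>) / q"
        using q by (intro divide_right_mono) auto
      then show ?thesis using q by (simp add: divide_divide_eq_left)
    qed
    also have "\<dots> \<le> (B0 * sqrt (2 * \<alpha>) + 2 * pi * A / sqrt \<alpha>) / q"
      by (rule divide_right_mono) (use T1 q in auto)
    finally show ?thesis using I2[OF w0] unfolding q_def by linarith
  qed
qed

theorem lemma11:
  fixes C lam \<alpha> :: real and N :: nat
  assumes "C > 0" and "lam > 0" and "0 < \<alpha>" and "\<alpha> \<le> lam / 2"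
  shows "\<exists>K::real. \<forall>(M::'a measure) (Y::'a \<Rightarrow> real) (f::real \<Rightarrow> real).
           prob_space M
         \<and> distributed M lborel Y (\<lambda>t. ennreal (f t))
         \<and> (\<forall>t. 0 \<le> f t) \<and> (\<forall>t<0. f t = 0)
         \<and> (\<forall>t\<ge>0. f t \<le> C * exp (- lam * t))
         \<and> piecewise_diff_monotone N f {0..}
         \<longrightarrow> (\<forall>s::complex. Re s = - \<alpha> \<longrightarrow>
               cmod (LINT x|M. exp (- s * complex_of_real (Y x))) \<le> K / sqrt (cmod s))"
proof -
  define A where "A = 2*C*(1 + 2*real N) + real N * (4*C + \<alpha> * W0 C lam)"
  define K where "K = W0 C lam * sqrt (2 * \<alpha>) + 2 * pi * A / sqrt \<alpha>"
  have W0nn: "0 \<le> W0 C lam" unfolding W0_def using assms(1) by (intro Bochner_Integration.integral_nonneg) auto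
  have Ann: "0 \<le> A" unfolding A_def using W0nn assms by (intro add_nonneg_nonneg mult_nonneg_nonneg) auto
  show ?thesis
  proof (intro exI[of _ K] allI impI)
    fix M :: "'a measure" and Y :: "'a \<Rightarrow> real" and f :: "real \<Rightarrow> real" and s :: complex
    assume H: "prob_space M
         \<and> distributed M lborel Y (\<lambda>t. ennreal (f t))
         \<and> (\<forall>t. 0 \<le> f t) \<and> (\<forall>t<0. f t = 0)
         \<and> (\<forall>t\<ge>0. f t \<le> C * exp (- lam * t))
         \<and> piecewise_diff_monotone N f {0..}"
      and s: "Re s = - \<alpha>"
    have dist: "distributed M lborel Y (\<lambda>t. ennreal (f t))" and f0: "\<And>t. 0 \<le> f t"
      and fneg: "\<And>t. t < 0 \<Longrightarrow> f t = 0" and fC: "\<And>t. t \<ge> 0 \<Longrightarrow> f t \<le> C * exp (- lam * t)"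
      using H by auto
    obtain J :: "nat \<Rightarrow> real set" where
      J: "\<forall>k<N. is_interval (J k) \<and> J k \<noteq> {} \<and> f differentiable_on J k \<and> (mono_on (J k) f \<or> antimono_on (J k) f)"
         "\<forall>j<N. \<forall>k<N. j \<noteq> k \<longrightarrow> J j \<inter> J k = {}" "(\<Union>k<N. J k) = {0..}"
      using H unfolding piecewise_diff_monotone_def by blast
    have "(\<lambda>t. ennreal (f t)) \<in> borel_measurable lborel" using dist by (rule distributed_borel_measurable)
    then have fm: "f \<in> borel_measurable borel" using f0 by simp
    have eq: "(LINT x|M. exp (- s * complex_of_real (Y x))) = (\<integral>t. f t *\<^sub>R exp (- s * complex_of_real t) \<partial>lborel)"
      by (rule bridge[OF dist f0])
    note F = fourier[where f=f and C=C and lam=lam and \<alpha>=\<alpha> and N=N and J=J and s=s]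
    have Jint: "\<And>k. k < N \<Longrightarrow> is_interval (J k)"
      and Jmono: "\<And>k. k < N \<Longrightarrow> mono_on (J k) f \<or> antimono_on (J k) f"
      and Jdisj: "\<And>j k. j < N \<Longrightarrow> k < N \<Longrightarrow> j \<noteq> k \<Longrightarrow> J j \<inter> J k = {}"
      using J by auto
    have F1: "cmod (\<integral>t. f t *\<^sub>R exp (- s * complex_of_real t) \<partial>lborel) \<le> W0 C lam"
      by (rule F(1)[OF fm f0 fneg fC assms(1,2,3,4) Jint Jmono Jdisj J(3) s])
    have F2: "Im s \<noteq> 0 \<Longrightarrow> cmod (\<integral>t. f t *\<^sub>R exp (- s * complex_of_real t) \<partial>lborel) \<le> pi / \<bar>Im s\<bar> * A"
      unfolding A_def by (rule F(2)[OF fm f0 fneg fC assms(1,2,3,4) Jint Jmono Jdisj J(3) s])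
    have r1: "\<alpha> \<le> cmod s" using abs_Re_le_cmod[of s] s assms(3) by simp
    have r2: "cmod s \<le> \<alpha> + \<bar>Im s\<bar>" using cmod_le[of s] s assms(3) by simp
    show "cmod (LINT x|M. exp (- s * complex_of_real (Y x))) \<le> K / sqrt (cmod s)"
      unfolding eq K_def
      by (rule arith_final[OF W0nn Ann assms(3) r1 r2 F1 F2])
  qed
qed

end
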